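(* Let $A\in\mathbb{R}^{n\times n}$ be nonsingular, $B\in\mathbb{R}^{n\times p}$, $C\in\mathbb{R}^{q\times n}$, and $X_0=O$. For $k=0,1,2,\dots$ suppose $A-X_kBB^T$ is nonsingular, let $\widetilde X_{k+1}=W_{k+1}\widetilde Y^{(k+1)}W_{k+1}^T$ be an approximate solution computed by EKSM of $$(A-X_kBB^T)X+X(A-X_kBB^T)^T=-X_kBB^TX_k-C^TC,$$ where the columns of $W_{k+1}$ form an orthonormal basis of $\mathbf{EK}^\square_{m_{k+1}}(A-X_kBB^T,[C^T,X_kB])$, set $Z_k=\widetilde X_{k+1}-X_k$, and define $X_{k+1}=X_k+\lambda_kZ_k$ for some step size $\lambda_k>0$. Then for every $k\ge0$, $$\mathrm{Range}(X_{k+1})\subseteq\mathbf{EK}^\square_{\bar m_{k+1}}(A,C^T)$$ for some integer $\bar m_{k+1}\le\sum_{j=1}^{k+1}m_j+2$; in particular, whenever $X_{k+1}=P_{k+1}P_{k+1}^T$ is a low-rank factorization, $\mathrm{Range}(P_{k+1})\subseteq \mathbf{EK}^\square_{\bar m_{k+1}}(A,C^T)$.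
   Context: For a nonsingular $M\in\mathbb{R}^{n\times n}$ and $G\in\mathbb{R}^{n\times s}$, the block extended Krylov subspace is $\mathbf{EK}^\square_m(M,G)=\mathrm{Range}([G,M^{-1}G,MG,M^{-2}G,\dots,M^{m-1}G,M^{-m}G])$. "Solving the Lyapunov equation $MX+XM^T+GG^T=0$ by EKSM" means computing an approximate solution of the form $VYV^T$, where the columns of $V$ form an orthonormal basis of $\mathbf{EK}^\square_m(M,G)$ for some $m$ and $Y$ is a small square matrix. *)

theory Defs
  imports "Jordan_Normal_Form.Gauss_Jordan_Elimination"
begin

definition mat_range :: "real mat \<Rightarrow> real vec set" where
  "mat_range M = {M *\<^sub>v x | x. x \<in> carrier_vec (dim_col M)}"

definition minv :: "real mat \<Rightarrow> real mat" where
  "minv M = the (mat_inverse M)"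

definition hcat :: "real mat \<Rightarrow> real mat \<Rightarrow> real mat" where
  "hcat G H = mat_of_cols (dim_row G) (cols G @ cols H)"

(* block extended Krylov matrix [G, M^{-1}G, MG, M^{-2}G, ..., M^{m-1}G, M^{-m}G] *)
definition EK_mat :: "nat \<Rightarrow> real mat \<Rightarrow> real mat \<Rightarrow> real mat" where
  "EK_mat m M G = mat_of_cols (dim_row G)
     (concat (map (\<lambda>j. cols ((M ^\<^sub>m j) * G) @ cols ((minv M ^\<^sub>m (Suc j)) * G)) [0..<m]))"

definition EK :: "nat \<Rightarrow> real mat \<Rightarrow> real mat \<Rightarrow> real vec set" where
  "EK m M G = mat_range (EK_mat m M G)"

definition orth_basis :: "nat \<Rightarrow> real mat \<Rightarrow> real vec set \<Rightarrow> bool" where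
  "orth_basis n W S \<longleftrightarrow> dim_row W = n \<and> W\<^sup>T * W = 1\<^sub>m (dim_col W) \<and> mat_range W = S"

end

theory Submission imports Defs begin

lemma range_carrier: "A \<in> carrier_mat n k \<Longrightarrow> mat_range A \<subseteq> carrier_vec n"
  unfolding mat_range_def by auto

lemma col_in_range: assumes "A \<in> carrier_mat n k" "j < k" shows "col A j \<in> mat_range A"
proof -
  have "col A j = A *\<^sub>v unit_vec k j"
    by (rule eq_vecI, insert assms, auto simp: scalar_prod_right_unit)
  thus ?thesis unfolding mat_range_def using assms by auto
qed

lemma cols_in_range: "v \<in> set (cols A) \<Longrightarrow> v \<in> mat_range A"
  using col_in_range[of A "dim_row A" "dim_col A"] unfolding cols_def by auto

lemma range_mult: assumes "A \<in> carrier_mat n k" "B \<in> carrier_mat k l"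
  shows "mat_range (A * B) \<subseteq> mat_range A"
proof
  fix v assume "v \<in> mat_range (A * B)"
  then obtain x where x0: "x \<in> carrier_vec (dim_col (A * B))" "v = (A * B) *\<^sub>v x" unfolding mat_range_def by auto
  have dl: "dim_col (A * B) = l" using assms by auto
  have x: "x \<in> carrier_vec l" "v = (A * B) *\<^sub>v x" using x0 unfolding dl by auto
  hence "v = A *\<^sub>v (B *\<^sub>v x)" using assms assoc_mult_mat_vec by blast
  moreover have "B *\<^sub>v x \<in> carrier_vec k" by (rule mult_mat_vec_carrier[OF assms(2) x(1)])
  ultimately show "v \<in> mat_range A" unfolding mat_range_def using assms by auto
qed

lemma range_zero: assumes "A \<in> carrier_mat n k" shows "0\<^sub>v n \<in> mat_range A"
proof -
  have "0\<^sub>v n = A *\<^sub>v 0\<^sub>v k" by (rule eq_vecI, insert assms, auto)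
  thus ?thesis unfolding mat_range_def using assms by auto
qed

lemma range_add: assumes "A \<in> carrier_mat n k" "u \<in> mat_range A" "v \<in> mat_range A"
  shows "u + v \<in> mat_range A"
proof -
  obtain x y where "x \<in> carrier_vec k" "y \<in> carrier_vec k" "u = A *\<^sub>v x" "v = A *\<^sub>v y"
    using assms unfolding mat_range_def by auto
  hence "u + v = A *\<^sub>v (x + y)" "x + y \<in> carrier_vec k" using mult_add_distrib_mat_vec[OF assms(1), of x y] by auto
  thus ?thesis unfolding mat_range_def using assms by auto
qed

lemma range_smult: assumes "A \<in> carrier_mat n k" "u \<in> mat_range A"
  shows "c \<cdot>\<^sub>v u \<in> mat_range A"
proof -
  obtain x where "x \<in> carrier_vec k" "u = A *\<^sub>v x"
    using assms unfolding mat_range_def by auto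
  hence "c \<cdot>\<^sub>v u = A *\<^sub>v (c \<cdot>\<^sub>v x)" "c \<cdot>\<^sub>v x \<in> carrier_vec k" using assms mult_mat_vec by auto
  thus ?thesis unfolding mat_range_def using assms by auto
qed

lemma range_minus: assumes "A \<in> carrier_mat n k" "u \<in> mat_range A" "v \<in> mat_range A"
  shows "u - v \<in> mat_range A"
proof -
  obtain x y where "x \<in> carrier_vec k" "y \<in> carrier_vec k" "u = A *\<^sub>v x" "v = A *\<^sub>v y"
    using assms unfolding mat_range_def by auto
  hence "u - v = A *\<^sub>v (x - y)" "x - y \<in> carrier_vec k" using mult_minus_distrib_mat_vec[OF assms(1), of x y] by auto
  thus ?thesis unfolding mat_range_def using assms by auto
qed

lemma range_fac: assumes E: "E \<in> carrier_mat n r" and M: "M \<in> carrier_mat n k"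
  and c: "\<And>j. j < k \<Longrightarrow> col M j \<in> mat_range E"
  shows "\<exists>F \<in> carrier_mat r k. M = E * F"
proof -
  have "\<forall>j. \<exists>x. j < k \<longrightarrow> x \<in> carrier_vec r \<and> col M j = E *\<^sub>v x"
    using c E unfolding mat_range_def by auto
  then obtain y where y: "\<And>j. j < k \<Longrightarrow> y j \<in> carrier_vec r \<and> col M j = E *\<^sub>v y j"
    by metis
  define F where "F = mat_of_cols r (map y [0..<k])"
  have F: "F \<in> carrier_mat r k" unfolding F_def by auto
  have cF: "j < k \<Longrightarrow> col F j = y j" for j unfolding F_def
    by (subst col_mat_of_cols, insert y, auto)
  have "M = E * F"
  proof (rule eq_matI)
    fix i j assume ij: "i < dim_row (E * F)" "j < dim_col (E * F)"
    hence ij': "i < n" "j < k" using E F by auto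
    have "(E * F) $$ (i, j) = row E i \<bullet> y j" using ij' E F cF by (auto)
    also have "\<dots> = (E *\<^sub>v y j) $ i" using ij' E by auto
    also have "\<dots> = col M j $ i" using y[OF ij'(2)] by simp
    also have "\<dots> = M $$ (i,j)" using ij' M by auto
    finally show "M $$ (i, j) = (E * F) $$ (i, j)" by simp
  qed (insert E F M, auto)
  thus ?thesis using F by auto
qed

lemma range_subI: assumes E: "E \<in> carrier_mat n r" and M: "M \<in> carrier_mat n k"
  and c: "\<And>j. j < k \<Longrightarrow> col M j \<in> mat_range E"
  shows "mat_range M \<subseteq> mat_range E"
  using range_fac[OF assms] range_mult[OF E] by auto

lemma range_subI2: assumes E: "E \<in> carrier_mat n r" and M: "M \<in> carrier_mat n k"
  and c: "\<And>v. v \<in> set (cols M) \<Longrightarrow> v \<in> mat_range E"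
  shows "mat_range M \<subseteq> mat_range E"
  by (rule range_subI[OF E M], rule c, insert M, auto simp: cols_def)

lemma range_sub_fac: assumes E: "E \<in> carrier_mat n r" and M: "M \<in> carrier_mat n k"
  and s: "mat_range M \<subseteq> mat_range E"
  shows "\<exists>F \<in> carrier_mat r k. M = E * F"
  by (rule range_fac[OF E M], insert col_in_range[OF M] s, auto)

lemma range_mult_left: assumes E: "E \<in> carrier_mat n r" and M: "M \<in> carrier_mat n k"
  and L: "L \<in> carrier_mat n' n"
  and s: "mat_range M \<subseteq> mat_range E"
  shows "mat_range (L * M) \<subseteq> mat_range (L * E)"
proof -
  obtain F where F: "F \<in> carrier_mat r k" "M = E * F" using range_sub_fac[OF E M s] by auto
  have "L * M = (L * E) * F" using F L E by (simp add: assoc_mult_mat)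
  thus ?thesis using range_mult[of "L * E" n' r F k] L E F by auto
qed

lemma range_add_mat: assumes E: "E \<in> carrier_mat n r" and P: "P \<in> carrier_mat n k"
  and Q: "Q \<in> carrier_mat n k" and "mat_range P \<subseteq> mat_range E" "mat_range Q \<subseteq> mat_range E"
  shows "mat_range (P + Q) \<subseteq> mat_range E"
proof
  fix v assume "v \<in> mat_range (P + Q)"
  then obtain x where x: "x \<in> carrier_vec k" "v = (P + Q) *\<^sub>v x" unfolding mat_range_def using P Q by auto
  hence "v = P *\<^sub>v x + Q *\<^sub>v x" using P Q add_mult_distrib_mat_vec by blast
  moreover have "P *\<^sub>v x \<in> mat_range E" "Q *\<^sub>v x \<in> mat_range E"
    using assms x unfolding mat_range_def by auto
  ultimately show "v \<in> mat_range E" using range_add[OF E] by auto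
qed

lemma range_minus_mat: assumes E: "E \<in> carrier_mat n r" and P: "P \<in> carrier_mat n k"
  and Q: "Q \<in> carrier_mat n k" and "mat_range P \<subseteq> mat_range E" "mat_range Q \<subseteq> mat_range E"
  shows "mat_range (P - Q) \<subseteq> mat_range E"
proof
  fix v assume "v \<in> mat_range (P - Q)"
  then obtain x where x: "x \<in> carrier_vec k" "v = (P - Q) *\<^sub>v x" unfolding mat_range_def using P Q by auto
  hence "v = P *\<^sub>v x - Q *\<^sub>v x" using P Q minus_mult_distrib_mat_vec by blast
  moreover have "P *\<^sub>v x \<in> mat_range E" "Q *\<^sub>v x \<in> mat_range E"
    using assms x unfolding mat_range_def by auto
  ultimately show "v \<in> mat_range E" using range_minus[OF E] by auto
qed

lemma range_smult_mat: assumes E: "E \<in> carrier_mat n r" and P: "P \<in> carrier_mat n k"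
  and "mat_range P \<subseteq> mat_range E"
  shows "mat_range (c \<cdot>\<^sub>m P) \<subseteq> mat_range E"
proof
  fix v assume "v \<in> mat_range (c \<cdot>\<^sub>m P)"
  then obtain x where x: "x \<in> carrier_vec k" "v = (c \<cdot>\<^sub>m P) *\<^sub>v x" unfolding mat_range_def using P by auto
  hence "v = c \<cdot>\<^sub>v (P *\<^sub>v x)" using P by (intro eq_vecI, auto simp: scalar_prod_def sum_distrib_left ac_simps)
  moreover have "P *\<^sub>v x \<in> mat_range E"
    using assms x unfolding mat_range_def by auto
  ultimately show "v \<in> mat_range E" using range_smult[OF E] by auto
qed

lemma pow_Suc_left: assumes "A \<in> carrier_mat n n" shows "A ^\<^sub>m Suc k = A * A ^\<^sub>m k"
proof (induct k)
  case 0 then show ?case using assms by auto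
next
  case (Suc k)
  have "A ^\<^sub>m Suc (Suc k) = (A * A ^\<^sub>m k) * A" using Suc by simp
  also have "\<dots> = A * (A ^\<^sub>m k * A)" using assms by (simp add: assoc_mult_mat[of _ n n _ n _ n] pow_carrier_mat)
  finally show ?case by simp
qed

lemma minv: assumes A: "A \<in> carrier_mat n n" and inv: "invertible_mat A"
  shows "A * minv A = 1\<^sub>m n" "minv A * A = 1\<^sub>m n" "minv A \<in> carrier_mat n n"
proof -
  obtain B where B: "inverts_mat A B" "inverts_mat B A" using inv unfolding invertible_mat_def by auto
  have "A * B = 1\<^sub>m n" using B A unfolding inverts_mat_def by auto
  have "dim_row B = n" "dim_col B = n" using B A unfolding inverts_mat_def
    by (metis carrier_matD index_mult_mat(2,3) index_one_mat(2,3))+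
  hence "A \<in> Units (ring_mat TYPE(real) n (undefined::unit))"
    using B A unfolding Units_def inverts_mat_def ring_mat_def by auto
  hence "mat_inverse A \<noteq> None" using mat_inverse(1)[OF A, of "undefined::unit"] by blast
  then obtain C where "mat_inverse A = Some C" by auto
  from mat_inverse(2)[OF A this] show "A * minv A = 1\<^sub>m n" "minv A * A = 1\<^sub>m n" "minv A \<in> carrier_mat n n"
    unfolding minv_def using \<open>mat_inverse A = Some C\<close> by auto
qed

definition eks :: "nat \<Rightarrow> real mat \<Rightarrow> real mat \<Rightarrow> real vec list" where
  "eks m M G = concat (map (\<lambda>j. cols (M ^\<^sub>m j * G) @ cols (minv M ^\<^sub>m Suc j * G)) [0..<m])"

lemma eks_set: "v \<in> set (eks m M G) \<longleftrightarrow>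
   (\<exists>j<m. v \<in> set (cols (M ^\<^sub>m j * G)) \<or> v \<in> set (cols (minv M ^\<^sub>m Suc j * G)))"
  unfolding eks_def by auto

lemma cols_carrier_set: "B \<in> carrier_mat n l \<Longrightarrow> v \<in> set (cols B) \<Longrightarrow> v \<in> carrier_vec n"
  unfolding cols_def by auto

lemma eks_carrier: assumes M: "M \<in> carrier_mat n n" and Mi: "minv M \<in> carrier_mat n n"
  and G: "G \<in> carrier_mat n l"
  shows "set (eks m M G) \<subseteq> carrier_vec n"
proof
  fix v assume "v \<in> set (eks m M G)"
  then obtain j where "v \<in> set (cols (M ^\<^sub>m j * G)) \<or> v \<in> set (cols (minv M ^\<^sub>m Suc j * G))"
    unfolding eks_set by auto
  moreover have "M ^\<^sub>m j * G \<in> carrier_mat n l" "minv M ^\<^sub>m Suc j * G \<in> carrier_mat n l"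
    using M Mi G by (auto intro!: mult_carrier_mat pow_carrier_mat)
  ultimately show "v \<in> carrier_vec n" using cols_carrier_set by blast
qed

lemma EK_mat_eq: "G \<in> carrier_mat n l \<Longrightarrow> EK_mat m M G = mat_of_cols n (eks m M G)"
  unfolding EK_mat_def eks_def by auto

lemma EK_carrier: assumes M: "M \<in> carrier_mat n n" and Mi: "minv M \<in> carrier_mat n n"
  and G: "G \<in> carrier_mat n l"
  shows "EK_mat m M G \<in> carrier_mat n (length (eks m M G))"
  unfolding EK_mat_eq[OF G] by auto

lemma EK_cols: assumes M: "M \<in> carrier_mat n n" and Mi: "minv M \<in> carrier_mat n n"
  and G: "G \<in> carrier_mat n l"
  shows "cols (EK_mat m M G) = eks m M G"
  unfolding EK_mat_eq[OF G] by (rule cols_mat_of_cols[OF eks_carrier[OF assms]])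

lemma mult_col_in_range: assumes B: "B \<in> carrier_mat n l" and L: "L \<in> carrier_mat n' n"
  and w: "w \<in> set (cols B)"
  shows "L *\<^sub>v w \<in> mat_range (L * B)"
proof -
  obtain c where c: "c < l" "w = col B c" using w B unfolding cols_def by auto
  have "L *\<^sub>v w = col (L * B) c" using col_mult2[OF L B c(1)] c by simp
  thus ?thesis using col_in_range[of "L * B" n' l c] L B c by auto
qed

lemma cols_obtain: "v \<in> set (cols X) \<Longrightarrow> \<exists>i<dim_col X. v = col X i"
  by (auto simp: cols_def)

lemma ek_sub_left: assumes M: "M \<in> carrier_mat n n" and Mi: "minv M \<in> carrier_mat n n"
  and G: "G \<in> carrier_mat n l" and L: "L \<in> carrier_mat n' n" and E: "E \<in> carrier_mat n' r"
  and h: "\<And>j. j < m \<Longrightarrow> mat_range (L * (M ^\<^sub>m j * G)) \<subseteq> mat_range E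
            \<and> mat_range (L * (minv M ^\<^sub>m Suc j * G)) \<subseteq> mat_range E"
  shows "mat_range (L * EK_mat m M G) \<subseteq> mat_range E"
proof -
  note EKc = EK_carrier[OF M Mi G, of m]
  show ?thesis
  proof (rule range_subI2[OF E])
    show "L * EK_mat m M G \<in> carrier_mat n' (length (eks m M G))" using L EKc by (rule mult_carrier_mat)
    fix v assume "v \<in> set (cols (L * EK_mat m M G))"
    from cols_obtain[OF this] obtain i where i0: "i < dim_col (L * EK_mat m M G)" "v = col (L * EK_mat m M G) i"
      by blast
    have i: "i < length (eks m M G)" "v = col (L * EK_mat m M G) i" using i0 EKc by auto
    have vL: "v = L *\<^sub>v col (EK_mat m M G) i" using col_mult2[OF L EKc i(1)] i by simp
    moreover have "col (EK_mat m M G) i = eks m M G ! i"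
      unfolding EK_mat_eq[OF G] by (rule col_mat_of_cols[OF i(1)], insert eks_carrier[OF M Mi G, of m] i(1), auto)
    hence "col (EK_mat m M G) i \<in> set (eks m M G)" using i(1) by simp
    then obtain j where j: "j < m" "col (EK_mat m M G) i \<in> set (cols (M ^\<^sub>m j * G)) \<or>
       col (EK_mat m M G) i \<in> set (cols (minv M ^\<^sub>m Suc j * G))" unfolding eks_set by auto
    have c1: "M ^\<^sub>m j * G \<in> carrier_mat n l" "minv M ^\<^sub>m Suc j * G \<in> carrier_mat n l"
      using M Mi G by (auto intro!: mult_carrier_mat pow_carrier_mat)
    show "v \<in> mat_range E"
      using j(2) h[OF j(1)] mult_col_in_range[OF c1(1) L] mult_col_in_range[OF c1(2) L] vL by blast
  qed
qed

lemma ek_sub: assumes M: "M \<in> carrier_mat n n" and Mi: "minv M \<in> carrier_mat n n"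
  and G: "G \<in> carrier_mat n l" and E: "E \<in> carrier_mat n r"
  and h: "\<And>j. j < m \<Longrightarrow> mat_range (M ^\<^sub>m j * G) \<subseteq> mat_range E
            \<and> mat_range (minv M ^\<^sub>m Suc j * G) \<subseteq> mat_range E"
  shows "mat_range (EK_mat m M G) \<subseteq> mat_range E"
proof -
  have c: "M ^\<^sub>m j * G \<in> carrier_mat n l" "minv M ^\<^sub>m Suc j * G \<in> carrier_mat n l" for j
      using M Mi G by (auto intro!: mult_carrier_mat pow_carrier_mat)
  have "mat_range (1\<^sub>m n * EK_mat m M G) \<subseteq> mat_range E"
  proof (rule ek_sub_left[OF M Mi G _ E])
    fix j assume j: "j < m"
    show "mat_range (1\<^sub>m n * (M ^\<^sub>m j * G)) \<subseteq> mat_range E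
            \<and> mat_range (1\<^sub>m n * (minv M ^\<^sub>m Suc j * G)) \<subseteq> mat_range E"
      unfolding left_mult_one_mat[OF c(1)[of j]] left_mult_one_mat[OF c(2)[of j]] using h[OF j] .
  qed simp
  thus ?thesis using EK_carrier[OF M Mi G, of m] by simp
qed

lemma ek_sup: assumes M: "M \<in> carrier_mat n n" and Mi: "minv M \<in> carrier_mat n n"
  and G: "G \<in> carrier_mat n l" and j: "j < m"
  shows "mat_range (M ^\<^sub>m j * G) \<subseteq> mat_range (EK_mat m M G)"
    "mat_range (minv M ^\<^sub>m Suc j * G) \<subseteq> mat_range (EK_mat m M G)"
proof -
  have c: "M ^\<^sub>m j * G \<in> carrier_mat n l" "minv M ^\<^sub>m Suc j * G \<in> carrier_mat n l"
      using M Mi G by (auto intro!: mult_carrier_mat pow_carrier_mat)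
  note EKc = EK_carrier[OF M Mi G, of m]
  note ec = EK_cols[OF M Mi G, of m]
  show "mat_range (M ^\<^sub>m j * G) \<subseteq> mat_range (EK_mat m M G)"
    by (rule range_subI2[OF EKc c(1)], rule cols_in_range, unfold ec eks_set, insert j, auto)
  show "mat_range (minv M ^\<^sub>m Suc j * G) \<subseteq> mat_range (EK_mat m M G)"
    by (rule range_subI2[OF EKc c(2)], rule cols_in_range, unfold ec eks_set, insert j, auto)
qed


context
  fixes A CT :: "real mat" and n q :: nat
  assumes A: "A \<in> carrier_mat n n" and Ainv: "invertible_mat A" and CT: "CT \<in> carrier_mat n q"
begin

abbreviation "KK s \<equiv> mat_range (EK_mat s A CT)"

lemma Ai: "A * minv A = 1\<^sub>m n" "minv A * A = 1\<^sub>m n" "minv A \<in> carrier_mat n n"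
  using minv[OF A Ainv] by auto

lemma EKA: "EK_mat s A CT \<in> carrier_mat n (length (eks s A CT))"
  by (rule EK_carrier[OF A Ai(3) CT])

lemma K_mono: assumes "s \<le> t" shows "KK s \<subseteq> KK t"
  by (rule ek_sub[OF A Ai(3) CT EKA], insert assms, intro conjI ek_sup[OF A Ai(3) CT], auto)

lemma K_CT: assumes "1 \<le> s" shows "mat_range CT \<subseteq> KK s"
proof -
  have "mat_range (A ^\<^sub>m 0 * CT) \<subseteq> KK s" using ek_sup(1)[OF A Ai(3) CT, of 0 s] assms by auto
  moreover have "A ^\<^sub>m 0 * CT = CT" using A CT by auto
  ultimately show ?thesis by simp
qed

lemma K_A: assumes N: "N \<in> carrier_mat n l" and s: "mat_range N \<subseteq> KK s"
  shows "mat_range (A * N) \<subseteq> KK (Suc s)" "mat_range (minv A * N) \<subseteq> KK (Suc s)"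
proof -
  let ?Ai = "minv A"
  have Ap: "A ^\<^sub>m j \<in> carrier_mat n n" "?Ai ^\<^sub>m j \<in> carrier_mat n n" for j
    using A Ai(3) by (auto intro: pow_carrier_mat)
  have c: "A ^\<^sub>m j * CT \<in> carrier_mat n q" "?Ai ^\<^sub>m j * CT \<in> carrier_mat n q" for j
    using Ap CT by (auto intro: mult_carrier_mat)
  have e1: "A * (A ^\<^sub>m j * CT) = A ^\<^sub>m Suc j * CT" for j
    by (subst pow_Suc_left[OF A], rule assoc_mult_mat[symmetric, OF A Ap(1) CT])
  have e2: "A * (?Ai ^\<^sub>m Suc j * CT) = ?Ai ^\<^sub>m j * CT" for j
  proof -
    have "A * (?Ai ^\<^sub>m Suc j * CT) = A * ((?Ai * ?Ai ^\<^sub>m j) * CT)" by (subst pow_Suc_left[OF Ai(3)], rule refl)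
    also have "\<dots> = A * (?Ai * (?Ai ^\<^sub>m j * CT))" using assoc_mult_mat[OF Ai(3) Ap(2) CT] by simp
    also have "\<dots> = (A * ?Ai) * (?Ai ^\<^sub>m j * CT)" using assoc_mult_mat[OF A Ai(3) c(2)] by simp
    also have "\<dots> = ?Ai ^\<^sub>m j * CT" using Ai(1) left_mult_one_mat[OF c(2)[of j]] by simp
    finally show ?thesis .
  qed
  have e3: "?Ai * (?Ai ^\<^sub>m Suc j * CT) = ?Ai ^\<^sub>m Suc (Suc j) * CT" for j
    by (subst (2) pow_Suc_left[OF Ai(3)], rule assoc_mult_mat[symmetric, OF Ai(3) Ap(2) CT])
  have e4: "?Ai * (A ^\<^sub>m Suc j * CT) = A ^\<^sub>m j * CT" for j
  proof -
    have "?Ai * (A ^\<^sub>m Suc j * CT) = ?Ai * ((A * A ^\<^sub>m j) * CT)" by (subst pow_Suc_left[OF A], rule refl)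
    also have "\<dots> = ?Ai * (A * (A ^\<^sub>m j * CT))" using assoc_mult_mat[OF A Ap(1) CT] by simp
    also have "\<dots> = (?Ai * A) * (A ^\<^sub>m j * CT)" using assoc_mult_mat[OF Ai(3) A c(1)] by simp
    also have "\<dots> = A ^\<^sub>m j * CT" using Ai(2) left_mult_one_mat[OF c(1)[of j]] by simp
    finally show ?thesis .
  qed
  have e5: "?Ai * (A ^\<^sub>m 0 * CT) = ?Ai ^\<^sub>m Suc 0 * CT"
    using A CT Ai(3) by simp
  have e6: "?Ai ^\<^sub>m 0 * CT = A ^\<^sub>m 0 * CT" using A CT Ai(3) by simp
  note sup1 = ek_sup(1)[OF A Ai(3) CT] and sup2 = ek_sup(2)[OF A Ai(3) CT]
  have "mat_range (A * N) \<subseteq> mat_range (A * EK_mat s A CT)"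
    by (rule range_mult_left[OF EKA N A s])
  also have "\<dots> \<subseteq> KK (Suc s)"
  proof (rule ek_sub_left[OF A Ai(3) CT A EK_carrier[OF A Ai(3) CT]])
    fix j assume j: "j < s"
    show "mat_range (A * (A ^\<^sub>m j * CT)) \<subseteq> KK (Suc s) \<and> mat_range (A * (?Ai ^\<^sub>m Suc j * CT)) \<subseteq> KK (Suc s)"
    proof (intro conjI)
      show "mat_range (A * (A ^\<^sub>m j * CT)) \<subseteq> KK (Suc s)" unfolding e1 using sup1[of "Suc j" "Suc s"] j by simp
      show "mat_range (A * (?Ai ^\<^sub>m Suc j * CT)) \<subseteq> KK (Suc s)" unfolding e2
      proof (cases j)
        case 0 thus "mat_range (?Ai ^\<^sub>m j * CT) \<subseteq> KK (Suc s)" using sup1[of 0 "Suc s"] A Ai(3) by simp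
      next
        case (Suc j') thus "mat_range (?Ai ^\<^sub>m j * CT) \<subseteq> KK (Suc s)" using sup2[of j' "Suc s"] j by simp
      qed
    qed
  qed
  finally show "mat_range (A * N) \<subseteq> KK (Suc s)" .
  have "mat_range (?Ai * N) \<subseteq> mat_range (?Ai * EK_mat s A CT)"
    by (rule range_mult_left[OF EKA N Ai(3) s])
  also have "\<dots> \<subseteq> KK (Suc s)"
  proof (rule ek_sub_left[OF A Ai(3) CT Ai(3) EK_carrier[OF A Ai(3) CT]])
    fix j assume j: "j < s"
    show "mat_range (?Ai * (A ^\<^sub>m j * CT)) \<subseteq> KK (Suc s) \<and> mat_range (?Ai * (?Ai ^\<^sub>m Suc j * CT)) \<subseteq> KK (Suc s)"
    proof (intro conjI)
      show "mat_range (?Ai * (?Ai ^\<^sub>m Suc j * CT)) \<subseteq> KK (Suc s)" unfolding e3 using sup2[of "Suc j" "Suc s"] j by simp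
      show "mat_range (?Ai * (A ^\<^sub>m j * CT)) \<subseteq> KK (Suc s)"
      proof (cases j)
        case 0 thus ?thesis using sup2[of 0 "Suc s"] A Ai(3) CT by simp
      next
        case (Suc j') thus ?thesis unfolding Suc e4 using sup1[of j' "Suc s"] j Suc by simp
      qed
    qed
  qed
  finally show "mat_range (?Ai * N) \<subseteq> KK (Suc s)" .
qed

end


lemma range_memI: "x \<in> carrier_vec (dim_col M) \<Longrightarrow> M *\<^sub>v x \<in> mat_range M"
  unfolding mat_range_def by blast

lemma range_memE: "v \<in> mat_range M \<Longrightarrow> \<exists>x \<in> carrier_vec (dim_col M). v = M *\<^sub>v x"
  unfolding mat_range_def by blast

lemma vec_rearr: fixes a b c :: "real vec" assumes "a \<in> carrier_vec n" "b \<in> carrier_vec n" "c \<in> carrier_vec n" "a - b = c"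
  shows "a = c + b"
proof (rule eq_vecI)
  fix i assume "i < dim_vec (c + b)"
  hence i: "i < n" using assms by auto
  have "(a - b) $ i = c $ i" using assms(4) by simp
  moreover have "(a - b) $ i = a $ i - b $ i" using index_minus_vec(1)[of i b a] i assms(2) by auto
  ultimately have "a $ i - b $ i = c $ i" by simp
  moreover have "(c + b) $ i = c $ i + b $ i" using i assms(2) by simp
  ultimately show "a $ i = (c + b) $ i" by linarith
qed (insert assms, auto)

lemma mult_range: assumes L: "L \<in> carrier_mat n' n" and M: "M \<in> carrier_mat n k" and u: "u \<in> mat_range M"
  shows "L *\<^sub>v u \<in> mat_range (L * M)"
proof -
  obtain w where w: "w \<in> carrier_vec k" "u = M *\<^sub>v w" using u M unfolding mat_range_def by auto
  have eq: "L *\<^sub>v u = (L * M) *\<^sub>v w" using w assoc_mult_mat_vec[OF L M w(1)] by simp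
  have dc: "w \<in> carrier_vec (dim_col (L * M))" using M w(1) by simp
  show ?thesis unfolding mat_range_def using eq dc by blast
qed

context
  fixes A CT X B :: "real mat" and n q p s0 :: nat
  assumes A: "A \<in> carrier_mat n n" and Ainv: "invertible_mat A" and CT: "CT \<in> carrier_mat n q"
    and X: "X \<in> carrier_mat n n" and B: "B \<in> carrier_mat n p"
    and Minv: "invertible_mat (A - X * B * B\<^sup>T)"
    and XK: "mat_range X \<subseteq> mat_range (EK_mat s0 A CT)" and s0: "1 \<le> s0"
begin

abbreviation "KK' s \<equiv> mat_range (EK_mat s A CT)"
abbreviation "Mk \<equiv> A - X * B * B\<^sup>T"

lemma XBB: "X * B * B\<^sup>T \<in> carrier_mat n n"
  by (rule mult_carrier_mat[OF mult_carrier_mat[OF X B]], unfold transpose_carrier_mat, rule B)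
lemma Mk: "Mk \<in> carrier_mat n n" by (rule minus_carrier_mat[OF XBB])
lemma Mki: "Mk * minv Mk = 1\<^sub>m n" "minv Mk * Mk = 1\<^sub>m n" "minv Mk \<in> carrier_mat n n"
  using minv[OF Mk Minv] by auto

lemma XBB_range: "mat_range (X * B * B\<^sup>T) \<subseteq> KK' s0"
proof -
  have "mat_range (X * B * B\<^sup>T) \<subseteq> mat_range (X * B)" using range_mult[of "X * B" n p "B\<^sup>T" n] X B by auto
  also have "\<dots> \<subseteq> mat_range X" using range_mult[OF X B] .
  finally show ?thesis using XK by auto
qed

lemma KM1: assumes N: "N \<in> carrier_mat n l" and Nt: "mat_range N \<subseteq> KK' t" and st: "s0 \<le> t"
  shows "mat_range (Mk * N) \<subseteq> KK' (Suc t)"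
proof -
  have eq: "Mk * N = A * N - X * B * B\<^sup>T * N" using minus_mult_distrib_mat[OF A XBB N] .
  have r2: "mat_range (X * B * B\<^sup>T * N) \<subseteq> KK' (Suc t)"
    using range_mult[OF XBB N] XBB_range K_mono[OF A Ainv CT, of s0 "Suc t"] st by auto
  have c1: "A * N \<in> carrier_mat n l" using A N by (rule mult_carrier_mat)
  have c2: "X * B * B\<^sup>T * N \<in> carrier_mat n l" using XBB N by (rule mult_carrier_mat)
  show ?thesis unfolding eq
    by (rule range_minus_mat[OF EK_carrier[OF A minv(3)[OF A Ainv] CT] c1 c2 K_A(1)[OF A Ainv CT N Nt] r2])
qed

lemma KM2: assumes N: "N \<in> carrier_mat n l" and Nt: "mat_range N \<subseteq> KK' t" and st: "s0 \<le> t"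
  shows "mat_range (minv Mk * N) \<subseteq> KK' (Suc t)"
proof
  let ?Ai = "minv A"
  note Ai = minv[OF A Ainv]
  note E = EK_carrier[OF A Ai(3) CT, of "Suc t"]
  have Y: "minv Mk * N \<in> carrier_mat n l" by (rule mult_carrier_mat[OF Mki(3) N])
  have dY: "dim_col (minv Mk * N) = l" by (rule carrier_matD(2)[OF Y])
  fix v assume "v \<in> mat_range (minv Mk * N)"
  from range_memE[OF this] obtain x where x: "x \<in> carrier_vec l" "v = (minv Mk * N) *\<^sub>v x"
    unfolding dY by blast
  have v: "v \<in> carrier_vec n" unfolding x(2) by (rule mult_mat_vec_carrier[OF Y x(1)])
  have "Mk *\<^sub>v v = Mk *\<^sub>v ((minv Mk * N) *\<^sub>v x)" by (simp only: x(2))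
  also have "\<dots> = (Mk * (minv Mk * N)) *\<^sub>v x" by (rule assoc_mult_mat_vec[OF Mk Y x(1), symmetric])
  also have "Mk * (minv Mk * N) = (Mk * minv Mk) * N" by (rule assoc_mult_mat[OF Mk Mki(3) N, symmetric])
  also have "\<dots> = N" unfolding Mki(1) by (rule left_mult_one_mat[OF N])
  finally have e1: "Mk *\<^sub>v v = N *\<^sub>v x" .
  let ?z = "(X * B * B\<^sup>T) *\<^sub>v v"
  have zc: "?z \<in> carrier_vec n" by (rule mult_mat_vec_carrier[OF XBB v])
  have Nxc: "N *\<^sub>v x \<in> carrier_vec n" by (rule mult_mat_vec_carrier[OF N x(1)])
  have Avc: "A *\<^sub>v v \<in> carrier_vec n" by (rule mult_mat_vec_carrier[OF A v])
  have "A *\<^sub>v v - ?z = Mk *\<^sub>v v" using minus_mult_distrib_mat_vec[OF A XBB v] by (rule sym)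
  also note e1
  finally have "A *\<^sub>v v - ?z = N *\<^sub>v x" .
  hence e2: "A *\<^sub>v v = N *\<^sub>v x + ?z" by (rule vec_rearr[OF Avc zc Nxc])
  have "v = 1\<^sub>m n *\<^sub>v v" by (rule one_mult_mat_vec[OF v, symmetric])
  also have "\<dots> = (?Ai * A) *\<^sub>v v" by (simp only: Ai(2))
  also have "\<dots> = ?Ai *\<^sub>v (A *\<^sub>v v)" by (rule assoc_mult_mat_vec[OF Ai(3) A v])
  also have "\<dots> = ?Ai *\<^sub>v (N *\<^sub>v x) + ?Ai *\<^sub>v ?z" unfolding e2
    by (rule mult_add_distrib_mat_vec[OF Ai(3) Nxc zc])
  finally have ev: "v = ?Ai *\<^sub>v (N *\<^sub>v x) + ?Ai *\<^sub>v ?z" .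
  have dz: "v \<in> carrier_vec (dim_col (X * B * B\<^sup>T))" unfolding carrier_matD(2)[OF XBB] by (rule v)
  have z: "?z \<in> mat_range (X * B * B\<^sup>T)" by (rule range_memI[OF dz])
  have "?Ai *\<^sub>v ?z \<in> mat_range (?Ai * (X * B * B\<^sup>T))" by (rule mult_range[OF Ai(3) XBB z])
  also have "\<dots> \<subseteq> KK' (Suc s0)" by (rule K_A(2)[OF A Ainv CT XBB XBB_range])
  also have "\<dots> \<subseteq> KK' (Suc t)" using K_mono[OF A Ainv CT, of "Suc s0" "Suc t"] st by simp
  finally have t2: "?Ai *\<^sub>v ?z \<in> KK' (Suc t)" .
  have dN: "x \<in> carrier_vec (dim_col N)" unfolding carrier_matD(2)[OF N] by (rule x(1))
  have Nx: "N *\<^sub>v x \<in> mat_range N" by (rule range_memI[OF dN])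
  have "?Ai *\<^sub>v (N *\<^sub>v x) \<in> mat_range (?Ai * N)" by (rule mult_range[OF Ai(3) N Nx])
  also have "\<dots> \<subseteq> KK' (Suc t)" by (rule K_A(2)[OF A Ainv CT N Nt])
  finally have t1: "?Ai *\<^sub>v (N *\<^sub>v x) \<in> KK' (Suc t)" .
  from range_add[OF E t1 t2] ev[symmetric] show "v \<in> KK' (Suc t)" by (rule back_subst)
qed

lemma KMpow: assumes G: "G \<in> carrier_mat n l" and Gs: "mat_range G \<subseteq> KK' s0"
  shows "mat_range (Mk ^\<^sub>m j * G) \<subseteq> KK' (s0 + j) \<and> mat_range (minv Mk ^\<^sub>m j * G) \<subseteq> KK' (s0 + j)"
proof (induct j)
  case 0
  have "Mk ^\<^sub>m 0 * G = G" unfolding pow_mat.simps(1) carrier_matD(1)[OF Mk] by (rule left_mult_one_mat[OF G])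
  moreover have "minv Mk ^\<^sub>m 0 * G = G" unfolding pow_mat.simps(1) carrier_matD(1)[OF Mki(3)] by (rule left_mult_one_mat[OF G])
  ultimately show ?case using Gs by simp
next
  case (Suc j)
  have c: "Mk ^\<^sub>m j * G \<in> carrier_mat n l" "minv Mk ^\<^sub>m j * G \<in> carrier_mat n l"
    by (rule mult_carrier_mat[OF pow_carrier_mat[OF Mk] G], rule mult_carrier_mat[OF pow_carrier_mat[OF Mki(3)] G])
  have e: "Mk ^\<^sub>m Suc j * G = Mk * (Mk ^\<^sub>m j * G)"
    by (subst pow_Suc_left[OF Mk], rule assoc_mult_mat[OF Mk pow_carrier_mat[OF Mk] G])
  have e': "minv Mk ^\<^sub>m Suc j * G = minv Mk * (minv Mk ^\<^sub>m j * G)"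
    by (subst pow_Suc_left[OF Mki(3)], rule assoc_mult_mat[OF Mki(3) pow_carrier_mat[OF Mki(3)] G])
  have h1: "mat_range (Mk ^\<^sub>m j * G) \<subseteq> KK' (s0 + j)" and h2: "mat_range (minv Mk ^\<^sub>m j * G) \<subseteq> KK' (s0 + j)"
    using Suc by auto
  have st: "s0 \<le> s0 + j" by simp
  have r1: "mat_range (Mk * (Mk ^\<^sub>m j * G)) \<subseteq> KK' (Suc (s0 + j))" by (rule KM1[OF c(1) h1 st])
  have r2: "mat_range (minv Mk * (minv Mk ^\<^sub>m j * G)) \<subseteq> KK' (Suc (s0 + j))" by (rule KM2[OF c(2) h2 st])
  show ?case unfolding e e' using r1 r2 by simp
qed

lemma EKM: assumes G: "G \<in> carrier_mat n l" and Gs: "mat_range G \<subseteq> KK' s0"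
  shows "mat_range (EK_mat m Mk G) \<subseteq> KK' (s0 + m)"
proof (rule ek_sub[OF Mk Mki(3) G EK_carrier[OF A minv(3)[OF A Ainv] CT]])
  fix j assume j: "j < m"
  have "KK' (s0 + j) \<subseteq> KK' (s0 + m)" "KK' (s0 + Suc j) \<subseteq> KK' (s0 + m)"
    using K_mono[OF A Ainv CT] j by auto
  thus "mat_range (Mk ^\<^sub>m j * G) \<subseteq> KK' (s0 + m) \<and> mat_range (minv Mk ^\<^sub>m Suc j * G) \<subseteq> KK' (s0 + m)"
    using KMpow[OF G Gs, of j] KMpow[OF G Gs, of "Suc j"] by auto
qed

lemma hcat_G: "hcat CT (X * B) \<in> carrier_mat n (q + p)" "mat_range (hcat CT (X * B)) \<subseteq> KK' s0"
proof -
  have cs: "set (cols CT @ cols (X * B)) \<subseteq> carrier_vec n"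
    using cols_carrier_set[OF CT] cols_carrier_set[OF mult_carrier_mat[OF X B]] by fastforce
  have eq: "hcat CT (X * B) = mat_of_cols n (cols CT @ cols (X * B))"
    unfolding hcat_def carrier_matD(1)[OF CT] ..
  have len: "length (cols CT @ cols (X * B)) = q + p"
    using carrier_matD(2)[OF CT] carrier_matD(2)[OF mult_carrier_mat[OF X B]] by simp
  show G: "hcat CT (X * B) \<in> carrier_mat n (q + p)" unfolding eq using mat_of_cols_carrier(1)[of n "cols CT @ cols (X * B)"] unfolding len .
  have ce: "cols (hcat CT (X * B)) = cols CT @ cols (X * B)" unfolding eq by (rule cols_mat_of_cols[OF cs])
  show "mat_range (hcat CT (X * B)) \<subseteq> KK' s0"
  proof (rule range_subI2[OF EK_carrier[OF A minv(3)[OF A Ainv] CT] G])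
    fix v assume "v \<in> set (cols (hcat CT (X * B)))"
    hence "v \<in> set (cols CT) \<or> v \<in> set (cols (X * B))" unfolding ce by auto
    moreover have "mat_range CT \<subseteq> KK' s0" using K_CT[OF A Ainv CT s0] .
    moreover have "mat_range (X * B) \<subseteq> KK' s0" using range_mult[OF X B] XK by auto
    ultimately show "v \<in> KK' s0" using cols_in_range by blast
  qed
qed

end


definition proj :: "real vec \<Rightarrow> real vec \<Rightarrow> real vec" where
  "proj e w = w - ((w \<bullet> e) / (e \<bullet> e)) \<cdot>\<^sub>v e"

lemma proj_carrier: "e \<in> carrier_vec n \<Longrightarrow> w \<in> carrier_vec n \<Longrightarrow> proj e w \<in> carrier_vec n"
  unfolding proj_def carrier_vec_def by simp

lemma proj_dot_l: assumes e: "e \<in> carrier_vec n" and a: "a \<in> carrier_vec n" and v: "v \<in> carrier_vec n"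
  shows "proj e a \<bullet> v = a \<bullet> v - (a \<bullet> e) / (e \<bullet> e) * (e \<bullet> v)"
proof -
  have c: "((a \<bullet> e) / (e \<bullet> e)) \<cdot>\<^sub>v e \<in> carrier_vec n" using e unfolding carrier_vec_def by simp
  show ?thesis unfolding proj_def minus_scalar_prod_distrib[OF a c v] smult_scalar_prod_distrib[OF e v] ..
qed

lemma proj_dot_r: assumes e: "e \<in> carrier_vec n" and a: "a \<in> carrier_vec n" and v: "v \<in> carrier_vec n"
  shows "a \<bullet> proj e v = a \<bullet> v - (v \<bullet> e) / (e \<bullet> e) * (a \<bullet> e)"
proof -
  have c: "((v \<bullet> e) / (e \<bullet> e)) \<cdot>\<^sub>v e \<in> carrier_vec n" using e unfolding carrier_vec_def by simp
  show ?thesis unfolding proj_def scalar_prod_minus_distrib[OF a v c] scalar_prod_smult_distrib[OF a e] ..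
qed

lemma self_dot_zero: assumes v: "(v :: real vec) \<in> carrier_vec n" and z: "v \<bullet> v = 0"
  shows "v = 0\<^sub>v n"
proof (rule eq_vecI)
  have dv: "dim_vec v = n" using v by (rule carrier_vecD)
  fix i assume "i < dim_vec (0\<^sub>v n)"
  hence i: "i < n" by simp
  have "v \<bullet> v = (\<Sum>i\<in>{0..<n}. v $ i * v $ i)" unfolding scalar_prod_def dv by simp
  hence "(\<Sum>i\<in>{0..<n}. v $ i * v $ i) = 0" using z by simp
  moreover have nn: "\<And>x. x \<in> {0..<n} \<Longrightarrow> 0 \<le> v $ x * v $ x" by (rule zero_le_square)
  moreover have fin: "finite {0..<n}" by simp
  ultimately have "\<forall>i\<in>{0..<n}. v $ i * v $ i = 0" using sum_nonneg_eq_0_iff[OF fin nn] by simp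
  hence "v $ i * v $ i = 0" using i by simp
  hence "v $ i = 0" by simp
  thus "v $ i = 0\<^sub>v n $ i" using i by simp
next
  show "dim_vec v = dim_vec (0\<^sub>v n)" using v by simp
qed

lemma proj_decomp: assumes e: "e \<in> carrier_vec n" and u: "u \<in> carrier_vec n"
  shows "u = proj e u + ((u \<bullet> e) / (e \<bullet> e)) \<cdot>\<^sub>v e"
proof -
  have d: "dim_vec e = n" "dim_vec u = n" using e u by auto
  show ?thesis
  proof (rule eq_vecI)
    fix i assume "i < dim_vec (proj e u + ((u \<bullet> e) / (e \<bullet> e)) \<cdot>\<^sub>v e)"
    hence i: "i < n" using d by simp
    show "u $ i = (proj e u + ((u \<bullet> e) / (e \<bullet> e)) \<cdot>\<^sub>v e) $ i"
      unfolding proj_def using i d by simp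
  qed (insert d, simp add: proj_def)
qed

lemma OC: "\<And>E u. E \<in> carrier_mat n k \<Longrightarrow> u \<in> carrier_vec n \<Longrightarrow>
   (\<And>v. v \<in> carrier_vec n \<Longrightarrow> (\<forall>j<k. col E j \<bullet> v = 0) \<Longrightarrow> u \<bullet> v = 0) \<Longrightarrow> u \<in> mat_range E"
proof (induct k)
  case (0 E u)
  have "u \<bullet> u = 0" using 0(3)[OF 0(2)] by simp
  hence "u = 0\<^sub>v n" by (rule self_dot_zero[OF 0(2)])
  thus ?case using range_zero[OF 0(1)] by simp
next
  case (Suc k E u)
  note E = Suc(2) and u = Suc(3) and H = Suc(4)
  define e where "e = col E 0"
  have ce: "col E j \<in> carrier_vec n" for j unfolding carrier_vec_def using carrier_matD(1)[OF E] by simp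
  have e: "e \<in> carrier_vec n" unfolding e_def by (rule ce)
  define E2 where "E2 = mat_of_cols n (map (\<lambda>j. proj e (col E (Suc j))) [0..<k])"
  have E2: "E2 \<in> carrier_mat n k" unfolding E2_def using mat_of_cols_carrier(1)[of n "map (\<lambda>j. proj e (col E (Suc j))) [0..<k]"] by simp
  have cE2: "j < k \<Longrightarrow> col E2 j = proj e (col E (Suc j))" for j
    unfolding E2_def by (subst col_mat_of_cols, insert proj_carrier[OF e ce], auto)
  have u2: "proj e u \<in> carrier_vec n" by (rule proj_carrier[OF e u])
  have "proj e u \<in> mat_range E2"
  proof (rule Suc(1)[OF E2 u2])
    fix v assume v: "v \<in> carrier_vec n" and hv: "\<forall>j<k. col E2 j \<bullet> v = 0"
    define w where "w = proj e v"
    have w: "w \<in> carrier_vec n" unfolding w_def by (rule proj_carrier[OF e v])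
    have ew: "e \<bullet> w = 0"
    proof (cases "e \<bullet> e = 0")
      case True
      hence "e = 0\<^sub>v n" by (rule self_dot_zero[OF e])
      thus ?thesis using w by simp
    next
      case False
      have "e \<bullet> w = e \<bullet> v - (v \<bullet> e) / (e \<bullet> e) * (e \<bullet> e)" unfolding w_def by (rule proj_dot_r[OF e e v])
      also have "\<dots> = e \<bullet> v - v \<bullet> e" using False by simp
      also have "\<dots> = 0" using comm_scalar_prod[OF e v] by simp
      finally show ?thesis .
    qed
    have "\<forall>j<Suc k. col E j \<bullet> w = 0"
    proof (intro allI impI)
      fix j assume j: "j < Suc k"
      show "col E j \<bullet> w = 0"
      proof (cases j)
        case 0 thus ?thesis using ew unfolding e_def by simp
      next
        case (Suc j')
        hence j': "j' < k" using j by simp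
        have "0 = col E2 j' \<bullet> v" using hv j' by simp
        also have "\<dots> = proj e (col E (Suc j')) \<bullet> v" using cE2[OF j'] by simp
        also have "\<dots> = col E (Suc j') \<bullet> v - (col E (Suc j') \<bullet> e) / (e \<bullet> e) * (e \<bullet> v)"
          by (rule proj_dot_l[OF e ce v])
        also have "\<dots> = col E (Suc j') \<bullet> v - (v \<bullet> e) / (e \<bullet> e) * (col E (Suc j') \<bullet> e)"
          using comm_scalar_prod[OF e v] by simp
        also have "\<dots> = col E (Suc j') \<bullet> w" unfolding w_def by (rule proj_dot_r[OF e ce v, symmetric])
        finally show ?thesis using Suc by simp
      qed
    qed
    hence "u \<bullet> w = 0" using H[OF w] by simp
    have "proj e u \<bullet> v = u \<bullet> v - (u \<bullet> e) / (e \<bullet> e) * (e \<bullet> v)" by (rule proj_dot_l[OF e u v])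
    also have "\<dots> = u \<bullet> v - (v \<bullet> e) / (e \<bullet> e) * (u \<bullet> e)"
      using comm_scalar_prod[OF e v] by simp
    also have "\<dots> = u \<bullet> w" unfolding w_def by (rule proj_dot_r[OF e u v, symmetric])
    finally show "proj e u \<bullet> v = 0" using \<open>u \<bullet> w = 0\<close> by simp
  qed
  moreover have "mat_range E2 \<subseteq> mat_range E"
  proof (rule range_subI[OF E E2])
    fix j assume j: "j < k"
    have c1: "col E (Suc j) \<in> mat_range E" using col_in_range[OF E] j by simp
    have c0: "e \<in> mat_range E" unfolding e_def using col_in_range[OF E] by simp
    show "col E2 j \<in> mat_range E" unfolding cE2[OF j] proj_def
      by (rule range_minus[OF E c1 range_smult[OF E c0]])
  qed
  ultimately have pu: "proj e u \<in> mat_range E" by auto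
  have e0: "e \<in> mat_range E" unfolding e_def using col_in_range[OF E] by simp
  have "proj e u + ((u \<bullet> e) / (e \<bullet> e)) \<cdot>\<^sub>v e \<in> mat_range E"
    by (rule range_add[OF E pu range_smult[OF E e0]])
  from this proj_decomp[OF e u, symmetric] show ?case by (rule back_subst)
qed

lemma PP: assumes E: "E \<in> carrier_mat n r" and P: "P \<in> carrier_mat n s"
  and R: "mat_range (P * P\<^sup>T) \<subseteq> mat_range E"
  shows "mat_range P \<subseteq> mat_range E"
proof
  fix u assume "u \<in> mat_range P"
  from range_memE[OF this] obtain x where x: "x \<in> carrier_vec s" "u = P *\<^sub>v x"
    using carrier_matD(2)[OF P] by auto
  have u: "u \<in> carrier_vec n" unfolding x(2) by (rule mult_mat_vec_carrier[OF P x(1)])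
  have PT: "P\<^sup>T \<in> carrier_mat s n" using P by simp
  have ET: "E\<^sup>T \<in> carrier_mat r n" using E by simp
  show "u \<in> mat_range E"
  proof (rule OC[OF E u])
    fix v assume v: "v \<in> carrier_vec n" and hv: "\<forall>j<r. col E j \<bullet> v = 0"
    have Etv: "E\<^sup>T *\<^sub>v v = 0\<^sub>v r"
    proof (rule eq_vecI)
      fix j assume "j < dim_vec (0\<^sub>v r)"
      hence j: "j < r" by simp
      have "(E\<^sup>T *\<^sub>v v) $ j = row E\<^sup>T j \<bullet> v" using j ET by simp
      also have "row E\<^sup>T j = col E j" using j E by simp
      finally show "(E\<^sup>T *\<^sub>v v) $ j = 0\<^sub>v r $ j" using hv j by simp
    qed (insert ET, simp)
    let ?w = "P\<^sup>T *\<^sub>v v"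
    have w: "?w \<in> carrier_vec s" by (rule mult_mat_vec_carrier[OF PT v])
    have PPT: "P * P\<^sup>T \<in> carrier_mat n n" by (rule mult_carrier_mat[OF P PT])
    have dv: "v \<in> carrier_vec (dim_col (P * P\<^sup>T))" unfolding carrier_matD(2)[OF PPT] by (rule v)
    have "(P * P\<^sup>T) *\<^sub>v v \<in> mat_range E" using R range_memI[OF dv] by auto
    from range_memE[OF this] obtain y where y: "y \<in> carrier_vec r" "(P * P\<^sup>T) *\<^sub>v v = E *\<^sub>v y"
      using carrier_matD(2)[OF E] by auto
    have "?w \<bullet> ?w = v \<bullet> (P *\<^sub>v ?w)" by (rule transpose_vec_mult_scalar[OF P w v])
    also have "P *\<^sub>v ?w = (P * P\<^sup>T) *\<^sub>v v" by (rule assoc_mult_mat_vec[OF P PT v, symmetric])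
    also have "\<dots> = E *\<^sub>v y" by (rule y(2))
    also have "v \<bullet> (E *\<^sub>v y) = (E\<^sup>T *\<^sub>v v) \<bullet> y" by (rule transpose_vec_mult_scalar[OF E y(1) v, symmetric])
    also have "\<dots> = 0" unfolding Etv using y(1) by simp
    finally have "?w = 0\<^sub>v s" by (rule self_dot_zero[OF w])
    have "u \<bullet> v = v \<bullet> u" by (rule comm_scalar_prod[OF u v])
    also have "\<dots> = ?w \<bullet> x" unfolding x(2) by (rule transpose_vec_mult_scalar[OF P x(1) v, symmetric])
    also have "\<dots> = 0" unfolding \<open>?w = 0\<^sub>v s\<close> using x(1) by simp
    finally show "u \<bullet> v = 0" .
  qed
qed


lemma range_zero_mat: assumes E: "E \<in> carrier_mat n r" shows "mat_range (0\<^sub>m n k) \<subseteq> mat_range E"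
proof
  fix v assume "v \<in> mat_range (0\<^sub>m n k)"
  from range_memE[OF this] obtain x where x: "x \<in> carrier_vec k" "v = 0\<^sub>m n k *\<^sub>v x" by auto
  have "v = 0\<^sub>v n" unfolding x(2) by (rule eq_vecI, insert x(1), auto)
  thus "v \<in> mat_range E" using range_zero[OF E] by simp
qed

theorem corollary1:
  fixes n p q :: nat
    and A B C :: "real mat"
    and X Xt W Y Z :: "nat \<Rightarrow> real mat"
    and m :: "nat \<Rightarrow> nat"
    and lam :: "nat \<Rightarrow> real"
  assumes A: "A \<in> carrier_mat n n" "invertible_mat A"
    and B: "B \<in> carrier_mat n p"
    and C: "C \<in> carrier_mat q n"
    and X0: "X 0 = 0\<^sub>m n n"
    and nonsing: "\<And>k. invertible_mat (A - X k * B * B\<^sup>T)"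
    and W: "\<And>k. orth_basis n (W (Suc k))
               (EK (m (Suc k)) (A - X k * B * B\<^sup>T) (hcat C\<^sup>T (X k * B)))"
    and Y: "\<And>k. Y (Suc k) \<in> carrier_mat (dim_col (W (Suc k))) (dim_col (W (Suc k)))"
    and Xt: "\<And>k. Xt (Suc k) = W (Suc k) * Y (Suc k) * (W (Suc k))\<^sup>T"
    and Z: "\<And>k. Z k = Xt (Suc k) - X k"
    and lam: "\<And>k. lam k > 0"
    and Xnext: "\<And>k. X (Suc k) = X k + lam k \<cdot>\<^sub>m Z k"
  shows "\<forall>k. \<exists>mb::nat. mb \<le> (\<Sum>j=1..Suc k. m j) + 2
            \<and> mat_range (X (Suc k)) \<subseteq> EK mb A C\<^sup>T
            \<and> (\<forall>r P. P \<in> carrier_mat n r \<and> X (Suc k) = P * P\<^sup>T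
                    \<longrightarrow> mat_range P \<subseteq> EK mb A C\<^sup>T)"
  proof -
  have CT: "C\<^sup>T \<in> carrier_mat n q" using C by simp
  define S where "S k = 1 + (\<Sum>j=1..k. m j)" for k
  have SSuc: "S (Suc k) = S k + m (Suc k)" for k unfolding S_def by simp
  have S1: "1 \<le> S k" for k unfolding S_def by simp
  have EKc: "EK_mat s A C\<^sup>T \<in> carrier_mat n (length (eks s A C\<^sup>T))" for s
    by (rule EK_carrier[OF A(1) minv(3)[OF A] CT])
  have inv: "X k \<in> carrier_mat n n \<and> mat_range (X k) \<subseteq> mat_range (EK_mat (S k) A C\<^sup>T)" for k
  proof (induct k)
    case 0
    show ?case unfolding X0 using range_zero_mat[OF EKc] by simp
  next
    case (Suc k)
    have Xk: "X k \<in> carrier_mat n n" and XK: "mat_range (X k) \<subseteq> mat_range (EK_mat (S k) A C\<^sup>T)"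
      using Suc by auto
    note G = hcat_G[OF A(1) A(2) CT Xk B nonsing[of k] XK S1[of k]]
    have EKM': "mat_range (EK_mat (m (Suc k)) (A - X k * B * B\<^sup>T) (hcat C\<^sup>T (X k * B)))
       \<subseteq> mat_range (EK_mat (S k + m (Suc k)) A C\<^sup>T)"
      by (rule EKM[OF A(1) A(2) CT Xk B nonsing[of k] XK S1[of k] G(1) G(2)])
    have ob: "dim_row (W (Suc k)) = n" "mat_range (W (Suc k)) = EK (m (Suc k)) (A - X k * B * B\<^sup>T) (hcat C\<^sup>T (X k * B))"
      using W[of k] unfolding orth_basis_def by auto
    define d where "d = dim_col (W (Suc k))"
    have Wc: "W (Suc k) \<in> carrier_mat n d" unfolding d_def using ob(1) by (intro carrier_matI) auto
    have Yc: "Y (Suc k) \<in> carrier_mat d d" unfolding d_def by (rule Y)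
    have WY: "W (Suc k) * Y (Suc k) \<in> carrier_mat n d" by (rule mult_carrier_mat[OF Wc Yc])
    have WT: "(W (Suc k))\<^sup>T \<in> carrier_mat d n" using Wc by simp
    have Xtc: "Xt (Suc k) \<in> carrier_mat n n" unfolding Xt by (rule mult_carrier_mat[OF WY WT])
    note E = EKc[of "S (Suc k)"]
    have "mat_range (Xt (Suc k)) \<subseteq> mat_range (W (Suc k) * Y (Suc k))" unfolding Xt by (rule range_mult[OF WY WT])
    also have "\<dots> \<subseteq> mat_range (W (Suc k))" by (rule range_mult[OF Wc Yc])
    also have "\<dots> \<subseteq> mat_range (EK_mat (S (Suc k)) A C\<^sup>T)" using ob(2) EKM' unfolding EK_def SSuc by simp
    finally have rXt: "mat_range (Xt (Suc k)) \<subseteq> mat_range (EK_mat (S (Suc k)) A C\<^sup>T)" .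
    have rXk: "mat_range (X k) \<subseteq> mat_range (EK_mat (S (Suc k)) A C\<^sup>T)"
      using XK K_mono[OF A(1) A(2) CT, of "S k" "S (Suc k)"] unfolding SSuc by auto
    have eqX: "X (Suc k) = X k + lam k \<cdot>\<^sub>m (Xt (Suc k) - X k)" using Xnext[of k] Z[of k] by simp
    have Dc: "Xt (Suc k) - X k \<in> carrier_mat n n" by (rule minus_carrier_mat[OF Xk])
    have LDc: "lam k \<cdot>\<^sub>m (Xt (Suc k) - X k) \<in> carrier_mat n n" by (rule smult_carrier_mat[OF Dc])
    have rD: "mat_range (Xt (Suc k) - X k) \<subseteq> mat_range (EK_mat (S (Suc k)) A C\<^sup>T)"
      by (rule range_minus_mat[OF E Xtc Xk rXt rXk])
    have rLD: "mat_range (lam k \<cdot>\<^sub>m (Xt (Suc k) - X k)) \<subseteq> mat_range (EK_mat (S (Suc k)) A C\<^sup>T)"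
      by (rule range_smult_mat[OF E Dc rD])
    have "mat_range (X k + lam k \<cdot>\<^sub>m (Xt (Suc k) - X k)) \<subseteq> mat_range (EK_mat (S (Suc k)) A C\<^sup>T)"
      by (rule range_add_mat[OF E Xk LDc rXk rLD])
    moreover have "X k + lam k \<cdot>\<^sub>m (Xt (Suc k) - X k) \<in> carrier_mat n n" by (rule add_carrier_mat[OF LDc])
    ultimately show ?case unfolding eqX by simp
  qed
  show ?thesis
  proof (intro allI)
    fix k
    have bound: "S (Suc k) \<le> (\<Sum>j=1..Suc k. m j) + 2" unfolding S_def by simp
    have rX: "mat_range (X (Suc k)) \<subseteq> EK (S (Suc k)) A C\<^sup>T" unfolding EK_def using inv[of "Suc k"] by simp
    have rP: "\<forall>r P. P \<in> carrier_mat n r \<and> X (Suc k) = P * P\<^sup>T \<longrightarrow> mat_range P \<subseteq> EK (S (Suc k)) A C\<^sup>T"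
    proof (intro allI impI)
      fix r P assume h: "P \<in> carrier_mat n r \<and> X (Suc k) = P * P\<^sup>T"
      have "mat_range (P * P\<^sup>T) \<subseteq> mat_range (EK_mat (S (Suc k)) A C\<^sup>T)" using rX h unfolding EK_def by simp
      from PP[OF EKc _ this] h show "mat_range P \<subseteq> EK (S (Suc k)) A C\<^sup>T" unfolding EK_def by blast
    qed
    show "\<exists>mb::nat. mb \<le> (\<Sum>j=1..Suc k. m j) + 2
            \<and> mat_range (X (Suc k)) \<subseteq> EK mb A C\<^sup>T
            \<and> (\<forall>r P. P \<in> carrier_mat n r \<and> X (Suc k) = P * P\<^sup>T
                    \<longrightarrow> mat_range P \<subseteq> EK mb A C\<^sup>T)"
      using bound rX rP by blast
  qed
qed

end
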